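(* Let $G$ be a circle of circumference $1$, let $\mathbf{x}\in G^n$ be such that the agents are on one semicircle, let $i\in N$ and $x_i'\in G$ be such that the agents in $\mathbf{x}'=(x_i',\mathbf{x}_{-i})$ are also on one semicircle. Then $\mathrm{cost}(\mathrm{lrm}(\mathbf{x}),x_i)\le\mathrm{cost}(\mathrm{lrm}(\mathbf{x}'),x_i)$.
   Context: $G$ is a circle of circumference $1$; $d(x,y)$ is the length of the shorter arc. For a distribution $P$ on $G$, $\mathrm{cost}(P,x_i)=\mathbb{E}_{y\sim P}[d(x_i,y)]$. Agents are on one semicircle if all locations lie in some closed arc of length $1/2$. LRM mechanism: for such a profile fix a closed arc of minimal length containing all agent locations (length at most $1/2$), with endpoints $l,r$ (agent locations); $\mathrm{lrm}(\mathbf{x})$ returns $l$ with probability $1/4$, $r$ with probability $1/4$, and the midpoint of that arc with probability $1/2$. *)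

theory Defs
  imports "HOL-Probability.Probability"
begin

text \<open>The circle G of circumference 1 is modelled as the reals modulo 1: a real number
  represents the point it determines on the circle.\<close>

definition cdist :: "real \<Rightarrow> real \<Rightarrow> real" where
  "cdist x y = min (frac (x - y)) (1 - frac (x - y))"

text \<open>Closed arc going counterclockwise from a to b: its length and membership.\<close>
definition arc_len :: "real \<Rightarrow> real \<Rightarrow> real" where
  "arc_len a b = frac (b - a)"

definition in_arc :: "real \<Rightarrow> real \<Rightarrow> real \<Rightarrow> bool" where
  "in_arc a b y \<longleftrightarrow> frac (y - a) \<le> frac (b - a)"

definition arc_mid :: "real \<Rightarrow> real \<Rightarrow> real" where
  "arc_mid a b = a + frac (b - a) / 2"

definition on_semicircle :: "nat \<Rightarrow> (nat \<Rightarrow> real) \<Rightarrow> bool" where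
  "on_semicircle n x \<longleftrightarrow> (\<exists>a. \<forall>j<n. in_arc a (a + 1/2) (x j))"

definition min_arc :: "nat \<Rightarrow> (nat \<Rightarrow> real) \<Rightarrow> real \<Rightarrow> real \<Rightarrow> bool" where
  "min_arc n x l r \<longleftrightarrow> l \<in> x ` {..<n} \<and> r \<in> x ` {..<n} \<and>
     (\<forall>j<n. in_arc l r (x j)) \<and>
     (\<forall>a b. (\<forall>j<n. in_arc a b (x j)) \<longrightarrow> arc_len l r \<le> arc_len a b)"

definition cost :: "real pmf \<Rightarrow> real \<Rightarrow> real" where
  "cost P y = measure_pmf.expectation P (\<lambda>z. cdist y z)"

text \<open>LRM output for a chosen minimal arc with endpoints l, r:
  l w.p. 1/4, r w.p. 1/4, midpoint w.p. 1/2.\<close>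
definition lrm :: "real \<Rightarrow> real \<Rightarrow> real pmf" where
  "lrm l r = bind_pmf (bernoulli_pmf (1/2)) (\<lambda>b.
     if b then return_pmf (arc_mid l r)
     else map_pmf (\<lambda>c. if c then l else r) (bernoulli_pmf (1/2)))"

end

theory Submission imports Defs begin

definition Dm :: "real \<Rightarrow> real" where "Dm w = min \<bar>w\<bar> (1 - \<bar>w\<bar>)"

lemma Dm_lip: "Dm a \<le> Dm b + \<bar>a - b\<bar>"
proof -
  have "\<bar>a\<bar> \<le> \<bar>b\<bar> + \<bar>a-b\<bar>" "\<bar>b\<bar> \<le> \<bar>a\<bar> + \<bar>a-b\<bar>" by linarith+
  thus ?thesis unfolding Dm_def min_def by auto
qed

lemma Dm_tri: assumes "\<bar>a\<bar> \<le> 1" "\<bar>b\<bar> \<le> 1" "\<bar>a - b\<bar> \<le> 1"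
  shows "Dm (a - b) \<le> Dm a + Dm b"
  using assms unfolding Dm_def min_def by (auto simp: abs_if)

lemma Dm_half: "0 \<le> c \<Longrightarrow> c \<le> 1/2 \<Longrightarrow> Dm c = c" unfolding Dm_def by auto

lemma half_aux: "2*a \<le> b + c + 2*d \<Longrightarrow> (a::real) \<le> (b+c)/2 + d" by (simp add: field_simps)

lemma geoC: assumes "0\<le>s" "s\<le>L" "L\<le>1/2" "0\<le>u" "u<1"
  shows "Dm (u-s) \<le> (Dm u + Dm (u-L))/2 + Dm (u - L/2)"
proof (cases "s \<le> L/2")
  case True
  have 1: "Dm (u-s) \<le> Dm u + s" using Dm_lip[of "u-s" u] assms by simp
  have 2: "Dm (u-s) \<le> Dm (u-L/2) + (L/2 - s)" using Dm_lip[of "u-s" "u-L/2"] assms True by simp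
  have "Dm ((u-L/2) - (u-L)) \<le> Dm (u-L/2) + Dm (u-L)" using assms by (intro Dm_tri) auto
  then have 3: "L/2 \<le> Dm (u-L/2) + Dm (u-L)" using Dm_half[of "L/2"] assms by simp
  have "2 * Dm (u-s) \<le> Dm u + Dm (u-L) + 2 * Dm (u-L/2)" using 1 2 3 by linarith
  then show ?thesis by (rule half_aux)
next
  case False
  have 1: "Dm (u-s) \<le> Dm (u-L) + (L - s)" using Dm_lip[of "u-s" "u-L"] assms by simp
  have 2: "Dm (u-s) \<le> Dm (u-L/2) + (s - L/2)" using Dm_lip[of "u-s" "u-L/2"] assms False by simp
  have "Dm (u - (u-L/2)) \<le> Dm u + Dm (u-L/2)" using assms by (intro Dm_tri) auto
  then have 3: "L/2 \<le> Dm u + Dm (u-L/2)" using Dm_half[of "L/2"] assms by simp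
  have "2 * Dm (u-s) \<le> Dm u + Dm (u-L) + 2 * Dm (u-L/2)" using 1 2 3 by linarith
  then show ?thesis by (rule half_aux)
qed

lemma geoB: assumes "0\<le>u" "u\<le>L" "L\<le>1/2"
  shows "(Dm u + Dm (u-L))/4 + Dm (u - L/2)/2 = max (Dm u) (Dm (u-L))/2"
proof -
  have "Dm u = u" "Dm (u-L) = L - u" "Dm (u - L/2) = \<bar>u - L/2\<bar>" using assms unfolding Dm_def by auto
  thus ?thesis by (simp add: max_def abs_if)
qed

lemma my_frac_diff: "frac (a - b) = frac (frac a - frac b)"
  using Archimedean_Field.frac_diff[of a b] by simp

lemma D_small: assumes "-1 < w" "w < 1" shows "min (frac w) (1 - frac w) = Dm w"
proof (cases "w \<ge> 0")
  case True thus ?thesis using assms by (simp add: frac_eq Dm_def)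
next
  case False
  have "frac w = w + 1" using assms False
    unfolding frac_unique_iff by simp
  thus ?thesis using assms False by (simp add: Dm_def)
qed

lemma cdist_via: "cdist y z = Dm (frac (y - c) - frac (z - c))"
proof -
  have "frac (y - z) = frac (frac (y - c) - frac (z - c))" using my_frac_diff[of "y-c" "z-c"] by simp
  moreover have "-1 < frac (y - c) - frac (z - c)" "frac (y - c) - frac (z - c) < 1"
    using frac_lt_1[of "y-c"] frac_ge_0[of "y-c"] frac_lt_1[of "z-c"] frac_ge_0[of "z-c"] by linarith+
  ultimately show ?thesis unfolding cdist_def using D_small by simp
qed

lemma cost_lrm: "cost (lrm l r) y = (cdist y l + cdist y r)/4 + cdist y (arc_mid l r)/2"
  unfolding cost_def lrm_def
  apply (subst pmf_expectation_bind[where A=UNIV])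
  apply (auto simp: UNIV_bool)
  done

lemma len_le: assumes "on_semicircle n x" "min_arc n x l r" shows "frac (r - l) \<le> 1/2"
proof -
  obtain a where "\<forall>j<n. in_arc a (a + 1/2) (x j)" using assms(1) unfolding on_semicircle_def by blast
  then have "arc_len l r \<le> arc_len a (a + 1/2)" using assms(2) unfolding min_arc_def by blast
  moreover have "arc_len a (a + 1/2) = 1/2" unfolding arc_len_def by (simp add: frac_eq)
  ultimately show ?thesis unfolding arc_len_def by simp
qed

lemma frac_half: "0 \<le> c \<Longrightarrow> c \<le> 1/2 \<Longrightarrow> frac (c/2) = c/2" by (simp add: frac_eq)

lemma mid_frac: assumes "frac (r - l) \<le> 1/2" shows "frac (arc_mid l r - l) = frac (r - l) / 2"
  unfolding arc_mid_def using assms frac_ge_0[of "r-l"] by (simp add: frac_eq)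

lemma cost_expr: assumes "frac (r - l) \<le> 1/2"
  shows "cost (lrm l r) p = (Dm (frac (p - l)) + Dm (frac (p - l) - frac (r - l)))/4
     + Dm (frac (p - l) - frac (r - l)/2)/2"
  unfolding cost_lrm cdist_via[of p l l] cdist_via[of p r l] cdist_via[of p "arc_mid l r" l] mid_frac[OF assms]
  by simp

lemma rhs_bound: assumes "in_arc l r q" "frac (r - l) \<le> 1/2"
  shows "cdist p q / 2 \<le> cost (lrm l r) p"
proof -
  have "Dm (frac (p - l) - frac (q - l)) \<le> (Dm (frac (p - l)) + Dm (frac (p - l) - frac (r - l)))/2
     + Dm (frac (p - l) - frac (r - l)/2)"
    using assms frac_ge_0[of "q-l"] frac_ge_0[of "p-l"] frac_lt_1[of "p-l"] unfolding in_arc_def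
    by (intro geoC) auto
  then show ?thesis unfolding cost_expr[OF assms(2)] cdist_via[of p q l] by (simp add: field_simps)
qed

lemma lhs_eq: assumes "in_arc l r p" "frac (r - l) \<le> 1/2"
  shows "cost (lrm l r) p = max (cdist p l) (cdist p r) / 2"
  unfolding cost_expr[OF assms(2)] cdist_via[of p l l] cdist_via[of p r l]
  using assms frac_ge_0[of "p-l"] unfolding in_arc_def by (simp add: geoB)

lemma cdist_nonneg: "0 \<le> cdist y z"
  unfolding cdist_def using frac_ge_0[of "y-z"] frac_lt_1[of "y-z"] by simp

lemma cost_nonneg: "0 \<le> cost (lrm l r) p"
  unfolding cost_lrm using cdist_nonneg[of p] by (simp add: add_nonneg_nonneg)

theorem mainTheorem10:
  fixes n :: nat and x :: "nat \<Rightarrow> real" and i :: nat and xi' :: real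
    and l r l' r' :: real
  assumes "i < n"
    and "on_semicircle n x"
    and "on_semicircle n (x(i := xi'))"
    and "min_arc n x l r"
    and "min_arc n (x(i := xi')) l' r'"
  shows "cost (lrm l r) (x i) \<le> cost (lrm l' r') (x i)"
proof -
  have L1: "frac (r - l) \<le> 1/2" using len_le assms(2,4) by blast
  have L2: "frac (r' - l') \<le> 1/2" using len_le assms(3,5) by blast
  have pin: "in_arc l r (x i)" using assms(1,4) unfolding min_arc_def by blast
  obtain q where q: "q \<in> {l, r}" "max (cdist (x i) l) (cdist (x i) r) = cdist (x i) q"
    by (cases "cdist (x i) l \<le> cdist (x i) r") (auto simp: max_def)
  have eq: "cost (lrm l r) (x i) = cdist (x i) q / 2" using lhs_eq[OF pin L1] q(2) by simp
  obtain j where j: "j < n" "q = x j" using q(1) assms(4) unfolding min_arc_def by auto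
  show ?thesis
  proof (cases "j = i")
    case True
    then have "cdist (x i) q = 0" using j unfolding cdist_def by simp
    then show ?thesis using eq cost_nonneg by simp
  next
    case False
    then have "q = (x(i := xi')) j" using j by simp
    then have "in_arc l' r' q" using j(1) assms(5) unfolding min_arc_def by metis
    then have "cdist (x i) q / 2 \<le> cost (lrm l' r') (x i)" using rhs_bound[OF _ L2] by blast
    then show ?thesis using eq by simp
  qed
qed
end
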